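(* Consider the online fair-division setting with deterministic feedback and the mechanism $\mathcal{M}_4$ described in the context. If all agents report truthfully, then $L_T\le 1+2n\,v_{\max}\rho_{\max}$ for all $T\ge 1$, and for every agent $i$ and every $T\ge1$, $U^e_{iT}-U_{iT}\le L_i\rho_{\max}$.
   Context: Resource and MMF: a divisible resource of size $1$ is shared by $n$ agents with entitlements $e_i>0$, $\sum_ie_i=1$. MMF$(e,d)$ on reported demands $d_1,\dots,d_n\ge0$: set $r=1$, $E=1$, $S=\{1,\dots,n\}$, $a=0$; process agents $j$ in ascending order of $d_j/e_j$; if $d_j<re_j/E$, set $a_j=d_j$, remove $j$ from $S$, $r\leftarrow r-d_j$, $E\leftarrow E-e_j$ and continue; otherwise set $a_k=re_k/E$ for all $k\in S$ and stop; output $a$. Online model: rounds $t=1,2,\dots$; agent $i$ has load $v_{it}\in(v_{\min},v_{\max}]$ ($v_{\min}>0$, fixed sequence), unknown non-decreasing payoff $f_i$, threshold $\alpha_i$, unit demand $\rho_i=f_i^{-1}(\alpha_i)\in[0,\rho_{\max}]$ ($\rho_{\max}$ known, $v_{\max}\rho_{\max}\le1$), true demand $d^*_{it}=v_{it}\rho_i$. Utility $u_i$ (of allocation per unit load) is strictly increasing on $[0,\rho_i]$, constant on $[\rho_i,\infty)$, $L_i$-Lipschitz. Deterministic feedback: receiving $a_{it}$ gives reward $X_{it}=f_i(a_{it}/v_{it})$. Mechanism $\mathcal{M}_4$: keep bounds $(\underline\rho_i,\bar\rho_i)$ initialised to $(0,\rho_{\max})$. The update with a pair $(x,X)$ is: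 if $X<\alpha_i$ set $\underline\rho_i\leftarrow\max(\underline\rho_i,x)$, else $\bar\rho_i\leftarrow\min(\bar\rho_i,x)$. Round 1: allocate $e_i$ to each agent, collect $X_i$, update with $(a_i/v_i,X_i)$. Each round $t\ge2$: set $\hat\rho_i=(\underline\rho_i+\bar\rho_i)/2$, obtain loads $v_i$, compute $a=$MMF$(e,(v_i\hat\rho_i)_i)$, allocate $a$, collect rewards $X_i$ and update each agent with $(a_i/v_i,X_i)$. Quantities: $\ell_{ur}(a)=1-\sum_ia_i$, $\ell_{or}(d,a)=\sum_i(a_i-d_i)^+$, $\ell_{ud}(d,a)=\sum_i(d_i-a_i)^+$, $\ell=\min(\ell_{ur}+\ell_{or},\ell_{ud})$, $L_T=\sum_{t\le T}\ell(d^*_t,a_t)$; $U_{iT}=\sum_{t\le T}u_i(a_{it}/v_{it})$, $U^e_{iT}=\sum_{t\le T}u_i(e_i/v_{it})$. *)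

theory Defs
  imports "HOL-Analysis.Analysis"
begin

text \<open>Agents are indexed by 0..<n; rounds by t = 1, 2, ...
  Loads are v i t, entitlements e i.\<close>

text \<open>MMF: process the agents (list order = ascending d_j/e_j) with remaining
  resource r and remaining entitlement E; the remaining list is the set S.\<close>
fun mmf_aux :: "(nat \<Rightarrow> real) \<Rightarrow> (nat \<Rightarrow> real) \<Rightarrow> nat list \<Rightarrow> real \<Rightarrow> real \<Rightarrow> (nat \<Rightarrow> real)" where
  "mmf_aux e d [] r E = (\<lambda>k. 0)"
| "mmf_aux e d (j # js) r E =
     (if d j < r * e j / E
      then (mmf_aux e d js (r - d j) (E - e j))(j := d j)
      else (\<lambda>k. if k \<in> set (j # js) then r * e k / E else 0))"

text \<open>Ties in d_j/e_j are broken by agent index (stable sort).\<close>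
definition MMF :: "nat \<Rightarrow> (nat \<Rightarrow> real) \<Rightarrow> (nat \<Rightarrow> real) \<Rightarrow> (nat \<Rightarrow> real)" where
  "MMF n e d = mmf_aux e d (sort_key (\<lambda>j. d j / e j) [0..<n]) 1 1"

definition bound_upd :: "real \<Rightarrow> real \<times> real \<Rightarrow> real \<Rightarrow> real \<Rightarrow> real \<times> real" where
  "bound_upd \<alpha> B x X = (if X < \<alpha> then (max (fst B) x, snd B) else (fst B, min (snd B) x))"

definition m4_alloc :: "nat \<Rightarrow> (nat \<Rightarrow> real) \<Rightarrow> (nat \<Rightarrow> nat \<Rightarrow> real) \<Rightarrow> (nat \<Rightarrow> real \<times> real) \<Rightarrow> nat \<Rightarrow> (nat \<Rightarrow> real)" where
  "m4_alloc n e v B t =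
     (if t \<le> 1 then e else MMF n e (\<lambda>i. v i t * ((fst (B i) + snd (B i)) / 2)))"

text \<open>Bounds after t rounds, under truthful deterministic feedback X_i = f_i(a_i/v_i).\<close>
primrec m4_bounds :: "nat \<Rightarrow> (nat \<Rightarrow> real) \<Rightarrow> (nat \<Rightarrow> nat \<Rightarrow> real) \<Rightarrow> (nat \<Rightarrow> real \<Rightarrow> real)
    \<Rightarrow> (nat \<Rightarrow> real) \<Rightarrow> real \<Rightarrow> nat \<Rightarrow> (nat \<Rightarrow> real \<times> real)" where
  "m4_bounds n e v f \<alpha> \<rho>max 0 = (\<lambda>i. (0, \<rho>max))"
| "m4_bounds n e v f \<alpha> \<rho>max (Suc t) =
     (let B = m4_bounds n e v f \<alpha> \<rho>max t;
          a = m4_alloc n e v B (Suc t)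
      in (\<lambda>i. bound_upd (\<alpha> i) (B i) (a i / v i (Suc t)) (f i (a i / v i (Suc t)))))"

definition m4_allocation :: "nat \<Rightarrow> (nat \<Rightarrow> real) \<Rightarrow> (nat \<Rightarrow> nat \<Rightarrow> real) \<Rightarrow> (nat \<Rightarrow> real \<Rightarrow> real)
    \<Rightarrow> (nat \<Rightarrow> real) \<Rightarrow> real \<Rightarrow> nat \<Rightarrow> (nat \<Rightarrow> real)" where
  "m4_allocation n e v f \<alpha> \<rho>max t = m4_alloc n e v (m4_bounds n e v f \<alpha> \<rho>max (t - 1)) t"

definition loss_ur :: "nat \<Rightarrow> (nat \<Rightarrow> real) \<Rightarrow> real" where
  "loss_ur n a = 1 - (\<Sum>i<n. a i)"
definition loss_or :: "nat \<Rightarrow> (nat \<Rightarrow> real) \<Rightarrow> (nat \<Rightarrow> real) \<Rightarrow> real" where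
  "loss_or n d a = (\<Sum>i<n. max (a i - d i) 0)"
definition loss_ud :: "nat \<Rightarrow> (nat \<Rightarrow> real) \<Rightarrow> (nat \<Rightarrow> real) \<Rightarrow> real" where
  "loss_ud n d a = (\<Sum>i<n. max (d i - a i) 0)"
definition loss :: "nat \<Rightarrow> (nat \<Rightarrow> real) \<Rightarrow> (nat \<Rightarrow> real) \<Rightarrow> real" where
  "loss n d a = min (loss_ur n a + loss_or n d a) (loss_ud n d a)"

end

theory Submission
  imports Defs
begin

lemma mmf_aux_props:
  assumes "distinct js" "sorted (map (\<lambda>j. d j / e j) js)"
    "\<forall>k\<in>set js. e k > 0 \<and> d k \<ge> 0" "E = (\<Sum>k\<in>set js. e k)" "r > 0" "r \<ge> E"
  shows "(\<forall>k\<in>set js. 0 \<le> mmf_aux e d js r E k \<and> mmf_aux e d js r E k \<le> d k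
            \<and> min (e k) (d k) \<le> mmf_aux e d js r E k)
       \<and> ((\<forall>k\<in>set js. mmf_aux e d js r E k = d k) \<or> (\<Sum>k\<in>set js. mmf_aux e d js r E k) = r)"
  using assms
proof (induction js arbitrary: r E)
  case Nil
  then show ?case by simp
next
  case (Cons j js)
  have jn: "j \<notin> set js" and dj: "distinct js" using Cons.prems(1) by auto
  have sj: "\<forall>k\<in>set js. d j / e j \<le> d k / e k" and sjs: "sorted (map (\<lambda>j. d j / e j) js)"
    using Cons.prems(2) by auto
  have ej: "e j > 0" "d j \<ge> 0" using Cons.prems(3) by auto
  have pos: "\<forall>k\<in>set js. e k > 0 \<and> d k \<ge> 0" using Cons.prems(3) by auto
  define E' where "E' = (\<Sum>k\<in>set js. e k)"
  have EE: "E = e j + E'" using Cons.prems(4) jn by (simp add: E'_def)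
  have E'0: "E' \<ge> 0" unfolding E'_def using pos by (intro sum_nonneg) auto
  have Epos: "E > 0" using EE E'0 ej by simp
  have r: "r > 0" "r \<ge> E" using Cons.prems by auto
  show ?case
  proof (cases "d j < r * e j / E")
    case True
    define r' where "r' = r - d j"
    have "r * E' / E \<ge> E'"
    proof -
      have "r * E' \<ge> E * E'" using r E'0 by (simp add: mult_right_mono)
      then show ?thesis using Epos by (simp add: pos_le_divide_eq mult.commute)
    qed
    moreover have "r' > r * E' / E"
    proof -
      have "r * E' / E = r - r * e j / E" using EE Epos by (simp add: field_simps)
      then show ?thesis using True r'_def by simp
    qed
    ultimately have r': "r' > 0" "r' \<ge> E'" using E'0 by auto
    have E'eq: "E - e j = E'" using EE by simp
    have IH: "(\<forall>k\<in>set js. 0 \<le> mmf_aux e d js r' E' k \<and> mmf_aux e d js r' E' k \<le> d k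
            \<and> min (e k) (d k) \<le> mmf_aux e d js r' E' k)
       \<and> ((\<forall>k\<in>set js. mmf_aux e d js r' E' k = d k) \<or> (\<Sum>k\<in>set js. mmf_aux e d js r' E' k) = r')"
      using Cons.IH[OF dj sjs pos E'_def r'] .
    have a: "mmf_aux e d (j # js) r E = (mmf_aux e d js r' E')(j := d j)"
      using True by (simp add: r'_def E'eq)
    have sumeq: "(\<Sum>k\<in>set js. ((mmf_aux e d js r' E')(j := d j)) k) = (\<Sum>k\<in>set js. mmf_aux e d js r' E' k)"
      using jn by (intro sum.cong) auto
    show ?thesis unfolding a
    proof (intro conjI)
      show "\<forall>k\<in>set (j # js). 0 \<le> ((mmf_aux e d js r' E')(j := d j)) k \<and> ((mmf_aux e d js r' E')(j := d j)) k \<le> d k \<and>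
        min (e k) (d k) \<le> ((mmf_aux e d js r' E')(j := d j)) k"
        using IH ej jn by auto
      show "(\<forall>k\<in>set (j # js). ((mmf_aux e d js r' E')(j := d j)) k = d k) \<or>
        (\<Sum>k\<in>set (j # js). ((mmf_aux e d js r' E')(j := d j)) k) = r"
        using IH jn sumeq r'_def by auto
    qed
  next
    case False
    have a: "mmf_aux e d (j # js) r E = (\<lambda>k. if k \<in> set (j # js) then r * e k / E else 0)"
      using False by simp
    have le: "r * e k / E \<le> d k" if k: "k \<in> set (j # js)" for k
    proof (cases "k = j")
      case True then show ?thesis using False by simp
    next
      case nk: False
      then have kin: "k \<in> set js" using k by simp
      have ek: "e k > 0" using pos kin by auto
      have "r / E \<le> d j / e j" using False ej Epos by (simp add: field_simps)
      also have "\<dots> \<le> d k / e k" using sj kin by auto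
      finally have "r / E \<le> d k / e k" .
      then show ?thesis using ek by (simp add: field_simps)
    qed
    have ge: "e k \<le> r * e k / E" if k: "k \<in> set (j # js)" for k
    proof -
      have "e k > 0" using k Cons.prems(3) by auto
      then have "e k * E \<le> r * e k" using r by (simp add: mult_left_mono mult.commute)
      then show ?thesis using Epos by (simp add: field_simps)
    qed
    have nn: "0 \<le> r * e k / E" if k: "k \<in> set (j # js)" for k
      using k Cons.prems(3) r Epos by auto
    have "(\<Sum>k\<in>set (j # js). r * e k / E) = r / E * (\<Sum>k\<in>set (j # js). e k)"
      by (simp add: sum_distrib_left)
    also have "\<dots> = r" using Cons.prems(4) Epos by simp
    finally have sm: "(\<Sum>k\<in>set (j # js). r * e k / E) = r" .
    show ?thesis unfolding a using le ge nn sm by (auto simp: min_le_iff_disj)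
  qed
qed

lemma mmf_props:
  assumes "\<And>i. i < n \<Longrightarrow> e i > 0 \<and> d i \<ge> 0" "(\<Sum>i<n. e i) = 1"
  shows "(\<forall>i<n. 0 \<le> MMF n e d i \<and> MMF n e d i \<le> d i \<and> min (e i) (d i) \<le> MMF n e d i)
     \<and> ((\<forall>i<n. MMF n e d i = d i) \<or> (\<Sum>i<n. MMF n e d i) = 1)"
proof -
  define js where "js = sort_key (\<lambda>j. d j / e j) [0..<n]"
  have s: "set js = {..<n}" unfolding js_def by auto
  have "distinct js" unfolding js_def by simp
  moreover have "sorted (map (\<lambda>j. d j / e j) js)" unfolding js_def by (rule sorted_sort_key)
  moreover have "\<forall>k\<in>set js. e k > 0 \<and> d k \<ge> 0" using assms(1) s by auto
  moreover have "1 = (\<Sum>k\<in>set js. e k)" using assms(2) s by simp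
  ultimately have "(\<forall>k\<in>set js. 0 \<le> mmf_aux e d js 1 1 k \<and> mmf_aux e d js 1 1 k \<le> d k
            \<and> min (e k) (d k) \<le> mmf_aux e d js 1 1 k)
       \<and> ((\<forall>k\<in>set js. mmf_aux e d js 1 1 k = d k) \<or> (\<Sum>k\<in>set js. mmf_aux e d js 1 1 k) = 1)"
    by (intro mmf_aux_props) auto
  then show ?thesis unfolding MMF_def js_def[symmetric] s by auto
qed

lemma upd_inv:
  fixes F :: "real \<Rightarrow> real"
  assumes "0 \<le> fst p" "fst p \<le> \<rho>" "\<rho> \<le> snd p" "snd p \<le> \<rho>m" "0 \<le> x"
    "mono_on {0..} F" "F \<rho> = \<alpha>" "\<And>y. 0 \<le> y \<Longrightarrow> y < \<rho> \<Longrightarrow> F y < \<alpha>" "0 \<le> \<rho>"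
  shows "0 \<le> fst (bound_upd \<alpha> p x (F x)) \<and> fst (bound_upd \<alpha> p x (F x)) \<le> \<rho>
     \<and> \<rho> \<le> snd (bound_upd \<alpha> p x (F x)) \<and> snd (bound_upd \<alpha> p x (F x)) \<le> \<rho>m"
proof (cases "F x < \<alpha>")
  case True
  have "x < \<rho>"
  proof (rule ccontr)
    assume "\<not> x < \<rho>"
    then have "F \<rho> \<le> F x" using assms by (intro mono_onD[OF assms(6)]) auto
    then show False using True assms(7) by simp
  qed
  then show ?thesis using True assms by (auto simp: bound_upd_def)
next
  case False
  have "\<rho> \<le> x" using assms(8)[of x] False assms(5) by force
  then show ?thesis using False assms by (auto simp: bound_upd_def)
qed

lemma upd_key:
  fixes F :: "real \<Rightarrow> real"
  assumes "fst p \<le> \<rho>" "\<rho> \<le> snd p" "0 \<le> x" "x \<le> (fst p + snd p) / 2"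
    "mono_on {0..} F" "F \<rho> = \<alpha>" "\<And>y. 0 \<le> y \<Longrightarrow> y < \<rho> \<Longrightarrow> F y < \<alpha>" "0 \<le> \<rho>"
  shows "snd (bound_upd \<alpha> p x (F x)) - fst (bound_upd \<alpha> p x (F x)) \<le> snd p - fst p"
    and "max (x - \<rho>) 0 \<le> (snd p - fst p) - (snd (bound_upd \<alpha> p x (F x)) - fst (bound_upd \<alpha> p x (F x)))"
    and "x = (fst p + snd p) / 2 \<Longrightarrow>
         max (\<rho> - x) 0 \<le> (snd p - fst p) - (snd (bound_upd \<alpha> p x (F x)) - fst (bound_upd \<alpha> p x (F x)))"
proof -
  have c1: "F x < \<alpha> \<Longrightarrow> x < \<rho>"
  proof (rule ccontr)
    assume "F x < \<alpha>" "\<not> x < \<rho>"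
    then have "F \<rho> \<le> F x" using assms by (intro mono_onD[OF assms(5)]) auto
    then show False using \<open>F x < \<alpha>\<close> assms(6) by simp
  qed
  have c2: "\<not> F x < \<alpha> \<Longrightarrow> \<rho> \<le> x" using assms(7)[of x] assms(3) by force
  show "snd (bound_upd \<alpha> p x (F x)) - fst (bound_upd \<alpha> p x (F x)) \<le> snd p - fst p"
    by (auto simp: bound_upd_def)
  show "max (x - \<rho>) 0 \<le> (snd p - fst p) - (snd (bound_upd \<alpha> p x (F x)) - fst (bound_upd \<alpha> p x (F x)))"
    using c1 c2 assms by (cases "F x < \<alpha>") (auto simp: bound_upd_def)
  show "x = (fst p + snd p) / 2 \<Longrightarrow>
         max (\<rho> - x) 0 \<le> (snd p - fst p) - (snd (bound_upd \<alpha> p x (F x)) - fst (bound_upd \<alpha> p x (F x)))"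
    using c1 c2 assms by (cases "F x < \<alpha>") (auto simp: bound_upd_def)
qed

lemma max_scale: "0 < (c::real) \<Longrightarrow> max (c * y) 0 = c * max y 0"
  by (auto simp: max_def mult_le_0_iff)

theorem theorem4:
  fixes n :: nat and e :: "nat \<Rightarrow> real" and v :: "nat \<Rightarrow> nat \<Rightarrow> real"
    and vmin vmax \<rho>max :: real
    and f :: "nat \<Rightarrow> real \<Rightarrow> real" and \<alpha> \<rho> :: "nat \<Rightarrow> real"
    and u :: "nat \<Rightarrow> real \<Rightarrow> real" and L :: "nat \<Rightarrow> real"
  assumes e_pos: "\<And>i. i < n \<Longrightarrow> e i > 0"
    and e_sum: "(\<Sum>i<n. e i) = 1"
    and vmin_pos: "vmin > 0"
    and loads: "\<And>i t. i < n \<Longrightarrow> t \<ge> 1 \<Longrightarrow> vmin < v i t \<and> v i t \<le> vmax"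
    and vr: "vmax * \<rho>max \<le> 1"
    and f_mono: "\<And>i. i < n \<Longrightarrow> mono_on {0..} (f i)"
    and rho_range: "\<And>i. i < n \<Longrightarrow> 0 \<le> \<rho> i \<and> \<rho> i \<le> \<rho>max"
    and rho_thr: "\<And>i. i < n \<Longrightarrow> f i (\<rho> i) = \<alpha> i"
    and rho_below: "\<And>i x. i < n \<Longrightarrow> 0 \<le> x \<Longrightarrow> x < \<rho> i \<Longrightarrow> f i x < \<alpha> i"
    and u_incr: "\<And>i. i < n \<Longrightarrow> strict_mono_on {0..\<rho> i} (u i)"
    and u_const: "\<And>i x. i < n \<Longrightarrow> \<rho> i \<le> x \<Longrightarrow> u i x = u i (\<rho> i)"
    and u_lip: "\<And>i. i < n \<Longrightarrow> lipschitz_on (L i) {0..} (u i)"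
  shows "(\<forall>T\<ge>1. (\<Sum>t=1..T. loss n (\<lambda>i. v i t * \<rho> i) (m4_allocation n e v f \<alpha> \<rho>max t))
              \<le> 1 + 2 * real n * vmax * \<rho>max)
       \<and> (\<forall>i<n. \<forall>T\<ge>1.
            (\<Sum>t=1..T. u i (e i / v i t))
            - (\<Sum>t=1..T. u i (m4_allocation n e v f \<alpha> \<rho>max t i / v i t))
            \<le> L i * \<rho>max)"
proof -
  define B where "B = m4_bounds n e v f \<alpha> \<rho>max"
  define A where "A = m4_allocation n e v f \<alpha> \<rho>max"
  define w where "w t i = snd (B t i) - fst (B t i)" for t i
  have vpos: "v i t > 0" if "i < n" "t \<ge> 1" for i t
    using loads[OF that] vmin_pos by linarith
  have A1: "A 1 = e" unfolding A_def m4_allocation_def m4_alloc_def by simp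
  have AS: "A (Suc t) = MMF n e (\<lambda>i. v i (Suc t) * ((fst (B t i) + snd (B t i)) / 2))" if "t \<ge> 1" for t
    using that unfolding A_def B_def m4_allocation_def m4_alloc_def by simp
  have BS: "B (Suc t) i = bound_upd (\<alpha> i) (B t i) (A (Suc t) i / v i (Suc t)) (f i (A (Suc t) i / v i (Suc t)))" for t i
    unfolding A_def B_def m4_allocation_def by (simp add: Let_def)
  have inv: "\<forall>i<n. 0 \<le> fst (B t i) \<and> fst (B t i) \<le> \<rho> i \<and> \<rho> i \<le> snd (B t i) \<and> snd (B t i) \<le> \<rho>max" for t
  proof (induction t)
    case 0
    then show ?case using rho_range by (simp add: B_def)
  next
    case (Suc t)
    have Anneg: "0 \<le> A (Suc t) i" if i: "i < n" for i
    proof (cases "t = 0")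
      case True
      then show ?thesis using A1 e_pos i by (simp add: less_imp_le)
    next
      case False
      then have t1: "t \<ge> 1" by simp
      have "\<And>i. i < n \<Longrightarrow> e i > 0 \<and> v i (Suc t) * ((fst (B t i) + snd (B t i)) / 2) \<ge> 0"
      proof -
        fix j assume j: "j < n"
        have "0 \<le> fst (B t j) + snd (B t j)" using Suc.IH[rule_format, OF j] by linarith
        then show "e j > 0 \<and> v j (Suc t) * ((fst (B t j) + snd (B t j)) / 2) \<ge> 0"
          using e_pos[OF j] vpos[OF j, of "Suc t"] by simp
      qed
      from mmf_props[OF this e_sum] show ?thesis using AS[OF t1] i by auto
    qed
    show ?case
    proof (intro allI impI)
      fix i assume i: "i < n"
      have "0 \<le> A (Suc t) i / v i (Suc t)" using Anneg[OF i] vpos[OF i, of "Suc t"] by simp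
      then show "0 \<le> fst (B (Suc t) i) \<and> fst (B (Suc t) i) \<le> \<rho> i \<and> \<rho> i \<le> snd (B (Suc t) i) \<and> snd (B (Suc t) i) \<le> \<rho>max"
        unfolding BS using Suc.IH i rho_range[OF i] f_mono[OF i] rho_thr[OF i] rho_below[OF i]
        by (intro upd_inv) auto
    qed
  qed
  have w_nn: "\<And>t i. i < n \<Longrightarrow> 0 \<le> w t i" and w_le: "\<And>t i. i < n \<Longrightarrow> w t i \<le> \<rho>max"
  proof -
    fix t i assume i: "i < n"
    have h: "0 \<le> fst (B t i)" "fst (B t i) \<le> \<rho> i" "\<rho> i \<le> snd (B t i)" "snd (B t i) \<le> \<rho>max"
      using inv i by auto
    show "0 \<le> w t i" unfolding w_def using h by linarith
  next
    fix t i assume i: "i < n"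
    have h: "0 \<le> fst (B t i)" "fst (B t i) \<le> \<rho> i" "\<rho> i \<le> snd (B t i)" "snd (B t i) \<le> \<rho>max"
      using inv i by auto
    show "w t i \<le> \<rho>max" unfolding w_def using h by linarith
  qed
  have round: "w (Suc t) i \<le> w t i
      \<and> max (A (Suc t) i - v i (Suc t) * \<rho> i) 0 \<le> vmax * (w t i - w (Suc t) i)
      \<and> (A (Suc t) i = v i (Suc t) * ((fst (B t i) + snd (B t i)) / 2) \<longrightarrow>
           max (v i (Suc t) * \<rho> i - A (Suc t) i) 0 \<le> vmax * (w t i - w (Suc t) i)
         \<and> \<rho> i - A (Suc t) i / v i (Suc t) \<le> w t i - w (Suc t) i)"
    if t1: "t \<ge> 1" and i: "i < n" for t i
  proof -
    define d where "d j = v j (Suc t) * ((fst (B t j) + snd (B t j)) / 2)" for j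
    have dn: "\<And>j. j < n \<Longrightarrow> e j > 0 \<and> d j \<ge> 0"
    proof -
      fix j assume j: "j < n"
      have "0 \<le> fst (B t j) + snd (B t j)" using inv[of t, rule_format, OF j] by linarith
      then show "e j > 0 \<and> d j \<ge> 0"
        using e_pos[OF j] vpos[OF j, of "Suc t"] unfolding d_def by simp
    qed
    have M: "0 \<le> A (Suc t) i \<and> A (Suc t) i \<le> d i"
      using mmf_props[OF dn e_sum] AS[OF t1] i unfolding d_def by auto
    define V where "V = v i (Suc t)"
    have V: "V > 0" "V \<le> vmax" using vpos[OF i] loads[OF i] unfolding V_def by auto
    define x where "x = A (Suc t) i / V"
    have Ax: "A (Suc t) i = V * x" using V unfolding x_def by simp
    have x0: "0 \<le> x" using M V unfolding x_def by simp
    have xle: "x \<le> (fst (B t i) + snd (B t i)) / 2"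
      using M V unfolding x_def d_def V_def[symmetric] by (simp add: divide_le_eq mult.commute)
    have BSi: "B (Suc t) i = bound_upd (\<alpha> i) (B t i) x (f i x)" unfolding BS x_def V_def ..
    have hB: "0 \<le> fst (B t i)" "fst (B t i) \<le> \<rho> i" "\<rho> i \<le> snd (B t i)" "snd (B t i) \<le> \<rho>max" "0 \<le> \<rho> i"
      using inv i rho_range[OF i] by auto
    have K: "snd (bound_upd (\<alpha> i) (B t i) x (f i x)) - fst (bound_upd (\<alpha> i) (B t i) x (f i x)) \<le> snd (B t i) - fst (B t i)"
      "max (x - \<rho> i) 0 \<le> (snd (B t i) - fst (B t i)) - (snd (bound_upd (\<alpha> i) (B t i) x (f i x)) - fst (bound_upd (\<alpha> i) (B t i) x (f i x)))"
      "x = (fst (B t i) + snd (B t i)) / 2 \<Longrightarrow>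
         max (\<rho> i - x) 0 \<le> (snd (B t i) - fst (B t i)) - (snd (bound_upd (\<alpha> i) (B t i) x (f i x)) - fst (bound_upd (\<alpha> i) (B t i) x (f i x)))"
      using upd_key[of "B t i" "\<rho> i" x "f i" "\<alpha> i", OF hB(2) hB(3) x0 xle f_mono[OF i] rho_thr[OF i] rho_below[OF i] hB(5)]
      by blast+
    have K': "w (Suc t) i \<le> w t i" "max (x - \<rho> i) 0 \<le> w t i - w (Suc t) i"
      "x = (fst (B t i) + snd (B t i)) / 2 \<Longrightarrow> max (\<rho> i - x) 0 \<le> w t i - w (Suc t) i"
      unfolding w_def BSi by (rule K(1), rule K(2), rule K(3))
    have g: "V * (w t i - w (Suc t) i) \<le> vmax * (w t i - w (Suc t) i)"
      using K'(1) V by (intro mult_right_mono) auto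
    have o: "max (A (Suc t) i - V * \<rho> i) 0 = V * max (x - \<rho> i) 0"
      unfolding Ax using max_scale[OF V(1), of "x - \<rho> i"] by (simp add: algebra_simps)
    have u: "max (V * \<rho> i - A (Suc t) i) 0 = V * max (\<rho> i - x) 0"
      unfolding Ax using max_scale[OF V(1), of "\<rho> i - x"] by (simp add: algebra_simps)
    have "V * max (x - \<rho> i) 0 \<le> V * (w t i - w (Suc t) i)"
      using K'(2) V(1) by (intro mult_left_mono) auto
    then have "max (A (Suc t) i - V * \<rho> i) 0 \<le> vmax * (w t i - w (Suc t) i)"
      unfolding o using g by linarith
    moreover have "max (V * \<rho> i - A (Suc t) i) 0 \<le> vmax * (w t i - w (Suc t) i)
         \<and> \<rho> i - x \<le> w t i - w (Suc t) i"
      if h: "A (Suc t) i = V * ((fst (B t i) + snd (B t i)) / 2)"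
    proof -
      have "x = (fst (B t i) + snd (B t i)) / 2" using h V unfolding x_def by simp
      note k3 = K'(3)[OF this]
      have "V * max (\<rho> i - x) 0 \<le> V * (w t i - w (Suc t) i)"
        using k3 V(1) by (intro mult_left_mono) auto
      then have "max (V * \<rho> i - A (Suc t) i) 0 \<le> vmax * (w t i - w (Suc t) i)"
        unfolding u using g by linarith
      moreover have "\<rho> i - x \<le> w t i - w (Suc t) i" using k3 by linarith
      ultimately show ?thesis by blast
    qed
    ultimately show ?thesis using K'(1) unfolding V_def x_def by blast
  qed
  have loss_round: "loss n (\<lambda>i. v i (Suc t) * \<rho> i) (A (Suc t)) \<le> (\<Sum>i<n. vmax * (w t i - w (Suc t) i))"
    if t1: "t \<ge> 1" for t
  proof -
    define d where "d j = v j (Suc t) * ((fst (B t j) + snd (B t j)) / 2)" for j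
    have dn: "\<And>j. j < n \<Longrightarrow> e j > 0 \<and> d j \<ge> 0"
    proof -
      fix j assume j: "j < n"
      have "0 \<le> fst (B t j) + snd (B t j)" using inv[of t, rule_format, OF j] by linarith
      then show "e j > 0 \<and> d j \<ge> 0"
        using e_pos[OF j] vpos[OF j, of "Suc t"] unfolding d_def by simp
    qed
    have M: "(\<forall>i<n. A (Suc t) i = d i) \<or> (\<Sum>i<n. A (Suc t) i) = 1"
      using mmf_props[OF dn e_sum] AS[OF t1] unfolding d_def by auto
    then show ?thesis
    proof
      assume all: "\<forall>i<n. A (Suc t) i = d i"
      have "loss n (\<lambda>i. v i (Suc t) * \<rho> i) (A (Suc t)) \<le> loss_ud n (\<lambda>i. v i (Suc t) * \<rho> i) (A (Suc t))"
        unfolding loss_def by simp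
      also have "\<dots> \<le> (\<Sum>i<n. vmax * (w t i - w (Suc t) i))"
        unfolding loss_ud_def using round[OF t1] all unfolding d_def by (intro sum_mono) blast
      finally show ?thesis .
    next
      assume s: "(\<Sum>i<n. A (Suc t) i) = 1"
      have "loss n (\<lambda>i. v i (Suc t) * \<rho> i) (A (Suc t)) \<le> loss_ur n (A (Suc t)) + loss_or n (\<lambda>i. v i (Suc t) * \<rho> i) (A (Suc t))"
        unfolding loss_def by simp
      also have "\<dots> = loss_or n (\<lambda>i. v i (Suc t) * \<rho> i) (A (Suc t))" using s unfolding loss_ur_def by simp
      also have "\<dots> \<le> (\<Sum>i<n. vmax * (w t i - w (Suc t) i))"
        unfolding loss_or_def using round[OF t1] by (intro sum_mono) blast
      finally show ?thesis .
    qed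
  qed
  have loss1: "loss n (\<lambda>i. v i 1 * \<rho> i) (A 1) \<le> 1"
  proof -
    have "loss n (\<lambda>i. v i 1 * \<rho> i) (A 1) \<le> loss_ur n (A 1) + loss_or n (\<lambda>i. v i 1 * \<rho> i) (A 1)"
      unfolding loss_def by simp
    also have "\<dots> = loss_or n (\<lambda>i. v i 1 * \<rho> i) e" using e_sum A1 unfolding loss_ur_def by simp
    also have "\<dots> \<le> (\<Sum>i<n. e i)" unfolding loss_or_def
    proof (intro sum_mono)
      fix i assume "i \<in> {..<n}"
      then have "0 \<le> v i 1 * \<rho> i" "0 < e i" using vpos rho_range e_pos by (auto simp: less_imp_le)
      then show "max (e i - v i 1 * \<rho> i) 0 \<le> e i" by simp
    qed
    finally show ?thesis using e_sum by simp
  qed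
  have vmax_nn: "0 \<le> vmax" if i: "i < n" for i
    using vpos[OF i, of 1] loads[OF i, of 1] by simp
  have Lsum: "(\<Sum>t=1..T. loss n (\<lambda>i. v i t * \<rho> i) (A t)) \<le> 1 + (\<Sum>i<n. vmax * (\<rho>max - w T i))"
    if "T \<ge> 1" for T
    using that
  proof (induction T rule: nat_induct_at_least)
    case base
    have "0 \<le> (\<Sum>i<n. vmax * (\<rho>max - w 1 i))"
      using w_le vmax_nn by (intro sum_nonneg mult_nonneg_nonneg) auto
    then show ?case using loss1 by simp
  next
    case (Suc T)
    have "(\<Sum>t=1..Suc T. loss n (\<lambda>i. v i t * \<rho> i) (A t))
        = (\<Sum>t=1..T. loss n (\<lambda>i. v i t * \<rho> i) (A t)) + loss n (\<lambda>i. v i (Suc T) * \<rho> i) (A (Suc T))"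
      by simp
    also have "\<dots> \<le> 1 + (\<Sum>i<n. vmax * (\<rho>max - w T i)) + (\<Sum>i<n. vmax * (w T i - w (Suc T) i))"
      using Suc.IH loss_round[OF Suc.hyps] by linarith
    also have "\<dots> = 1 + (\<Sum>i<n. vmax * (\<rho>max - w (Suc T) i))"
      by (simp add: sum.distrib[symmetric] algebra_simps)
    finally show ?case .
  qed
  have u_mono: "u i y \<le> u i z" if i: "i < n" and yz: "0 \<le> y" "y \<le> z" for i y z
  proof -
    have sm: "\<And>a b. a \<in> {0..\<rho> i} \<Longrightarrow> b \<in> {0..\<rho> i} \<Longrightarrow> a \<le> b \<Longrightarrow> u i a \<le> u i b"
    proof -
      fix a b assume ab: "a \<in> {0..\<rho> i}" "b \<in> {0..\<rho> i}" "a \<le> b"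
      show "u i a \<le> u i b"
      proof (cases "a = b")
        case False
        then have "a < b" using ab by simp
        then show ?thesis using strict_mono_onD[OF u_incr[OF i] ab(1) ab(2)] by simp
      qed simp
    qed
    show ?thesis
    proof (cases "z \<le> \<rho> i")
      case True then show ?thesis using sm[of y z] yz by auto
    next
      case False
      then have uz: "u i z = u i (\<rho> i)" using u_const[OF i, of z] by simp
      show ?thesis
      proof (cases "y \<le> \<rho> i")
        case True then show ?thesis using sm[of y "\<rho> i"] yz uz rho_range[OF i] by auto
      next
        case False then show ?thesis using u_const[OF i, of y] uz by simp
      qed
    qed
  qed
  have u_round: "u i (e i / v i (Suc t)) - u i (A (Suc t) i / v i (Suc t)) \<le> L i * (w t i - w (Suc t) i)"
    if t1: "t \<ge> 1" and i: "i < n" for t i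
  proof -
    define d where "d j = v j (Suc t) * ((fst (B t j) + snd (B t j)) / 2)" for j
    have dn: "\<And>j. j < n \<Longrightarrow> e j > 0 \<and> d j \<ge> 0"
    proof -
      fix j assume j: "j < n"
      have "0 \<le> fst (B t j) + snd (B t j)" using inv[of t, rule_format, OF j] by linarith
      then show "e j > 0 \<and> d j \<ge> 0"
        using e_pos[OF j] vpos[OF j, of "Suc t"] unfolding d_def by simp
    qed
    have M: "0 \<le> A (Suc t) i \<and> A (Suc t) i \<le> d i \<and> min (e i) (d i) \<le> A (Suc t) i"
      using mmf_props[OF dn e_sum] AS[OF t1] i unfolding d_def by auto
    define V where "V = v i (Suc t)"
    have V: "V > 0" using vpos[OF i] unfolding V_def by auto
    define x where "x = A (Suc t) i / V"
    define y where "y = e i / V"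
    have x0: "0 \<le> x" using M V unfolding x_def by simp
    have y0: "0 \<le> y" using e_pos[OF i] V unfolding y_def by simp
    have L0: "0 \<le> L i" using lipschitz_on_nonneg[OF u_lip[OF i]] .
    have R: "w (Suc t) i \<le> w t i" using round[OF t1 i] by blast
    have R0: "0 \<le> L i * (w t i - w (Suc t) i)" using L0 R by simp
    have "u i y - u i x \<le> L i * (w t i - w (Suc t) i)"
    proof (cases "e i \<le> A (Suc t) i \<or> \<rho> i \<le> x")
      case True
      have "u i y \<le> u i x"
      proof (cases "e i \<le> A (Suc t) i")
        case True
        then have "y \<le> x" using V unfolding x_def y_def by (simp add: divide_right_mono)
        then show ?thesis using u_mono[OF i y0] by simp
      next
        case False
        then have rx: "\<rho> i \<le> x" using True by simp
        have ux: "u i x = u i (\<rho> i)" using u_const[OF i rx] .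
        show ?thesis
        proof (cases "y \<le> \<rho> i")
          case True then show ?thesis using u_mono[OF i y0 True] ux by simp
        next
          case False then show ?thesis using u_const[OF i, of y] ux by simp
        qed
      qed
      then show ?thesis using R0 by simp
    next
      case False
      then have lt: "A (Suc t) i < e i" "x < \<rho> i" by auto
      have Ad: "A (Suc t) i = d i" using M lt(1) by (auto simp: min_def split: if_splits)
      then have "\<rho> i - x \<le> w t i - w (Suc t) i"
        using round[OF t1 i] unfolding d_def x_def V_def by blast
      have xy: "x \<le> y" using lt(1) V unfolding x_def y_def by (simp add: divide_right_mono)
      define m where "m = min y (\<rho> i)"
      have um: "u i y \<le> u i m"
      proof (cases "y \<le> \<rho> i")
        case True then show ?thesis unfolding m_def by simp
      next
        case False then show ?thesis unfolding m_def using u_const[OF i, of y] by simp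
      qed
      have xm: "x \<le> m" "m \<le> \<rho> i" using xy lt(2) unfolding m_def by auto
      have "dist (u i m) (u i x) \<le> L i * dist m x"
        using lipschitz_onD[OF u_lip[OF i]] x0 xm by auto
      then have "u i m - u i x \<le> L i * (m - x)" using xm by (simp add: dist_real_def)
      also have "\<dots> \<le> L i * (\<rho> i - x)" using L0 xm by (intro mult_left_mono) auto
      also have "\<dots> \<le> L i * (w t i - w (Suc t) i)"
        using L0 \<open>\<rho> i - x \<le> w t i - w (Suc t) i\<close> by (intro mult_left_mono) auto
      finally show ?thesis using um by simp
    qed
    then show ?thesis unfolding x_def y_def V_def .
  qed
  have Usum: "(\<Sum>t=1..T. u i (e i / v i t) - u i (A t i / v i t)) \<le> L i * (\<rho>max - w T i)"
    if "T \<ge> 1" and i: "i < n" for T i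
    using that(1)
  proof (induction T rule: nat_induct_at_least)
    case base
    have "0 \<le> L i * (\<rho>max - w 1 i)"
      using w_le[OF i] lipschitz_on_nonneg[OF u_lip[OF i]] by simp
    then show ?case using A1 by simp
  next
    case (Suc T)
    have "(\<Sum>t=1..Suc T. u i (e i / v i t) - u i (A t i / v i t))
       = (\<Sum>t=1..T. u i (e i / v i t) - u i (A t i / v i t)) + (u i (e i / v i (Suc T)) - u i (A (Suc T) i / v i (Suc T)))"
      by simp
    also have "\<dots> \<le> L i * (\<rho>max - w T i) + L i * (w T i - w (Suc T) i)"
      using Suc.IH u_round[OF Suc.hyps i] by linarith
    also have "\<dots> = L i * (\<rho>max - w (Suc T) i)" by (simp add: algebra_simps)
    finally show ?case .
  qed
  show ?thesis
  proof (intro conjI allI impI)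
    fix T :: nat assume T: "T \<ge> 1"
    have "(\<Sum>i<n. vmax * (\<rho>max - w T i)) \<le> (\<Sum>i<n. vmax * \<rho>max)"
      using w_nn vmax_nn by (intro sum_mono mult_left_mono) auto
    also have "\<dots> \<le> 2 * real n * vmax * \<rho>max"
    proof (cases "n = 0")
      case False
      then have "0 \<le> vmax * \<rho>max" using vmax_nn[of 0] rho_range[of 0] by simp
      then have h: "0 \<le> real n * (vmax * \<rho>max)" by (rule mult_nonneg_nonneg[OF of_nat_0_le_iff])
      have "(\<Sum>i<n. vmax * \<rho>max) = real n * (vmax * \<rho>max)" by simp
      moreover have "2 * real n * vmax * \<rho>max = 2 * (real n * (vmax * \<rho>max))" by (simp add: algebra_simps)
      ultimately show ?thesis using h by linarith
    qed simp
    finally show "(\<Sum>t=1..T. loss n (\<lambda>i. v i t * \<rho> i) (m4_allocation n e v f \<alpha> \<rho>max t))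
              \<le> 1 + 2 * real n * vmax * \<rho>max"
      using Lsum[OF T] unfolding A_def by simp
  next
    fix i :: nat and T :: nat assume i: "i < n" and T: "T \<ge> 1"
    have "L i * (\<rho>max - w T i) \<le> L i * \<rho>max"
      using w_nn[OF i] lipschitz_on_nonneg[OF u_lip[OF i]] by (simp add: mult_left_mono)
    then show "(\<Sum>t=1..T. u i (e i / v i t))
            - (\<Sum>t=1..T. u i (m4_allocation n e v f \<alpha> \<rho>max t i / v i t)) \<le> L i * \<rho>max"
      using Usum[OF T i] unfolding A_def sum_subtractf[symmetric] by simp
  qed
qed

end
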